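(* Let $(S,+,\cdot)$ be a left semi-brace. Then the semigroup $(S,+)$ is stationary on the right, i.e. for all $a,b,c,x\in S$, $a+b=a+c$ implies $x+b=x+c$. Consequently $(S,+)$ is a rectangular semigroup, and moreover: (1) the set $E(S)$ of idempotents of $(S,+)$ is a rectangular band; (2) an element $e\in S$ belongs to $E(S)$ if and only if $e$ is a middle unit of $(S,+)$, i.e. $a+e+b=a+b$ for all $a,b\in S$.
   Context: A left semi-brace is a triple $(S,+,\cdot)$ such that $(S,+)$ is a semigroup (not necessarily commutative), $(S,\cdot)$ is a group (with inverse $a^{-1}$ and identity $1$), and $a(b+c)=ab+a(a^{-1}+c)$ for all $a,b,c\in S$. A semigroup $(S,+)$ is rectangular if for all $a,b,x,y\in S$, $a+x=b+x=a+y$ implies $a+x=b+y$. A rectangular band is a rectangular semigroup all of whose elements are idempotent. *)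

theory Defs
  imports Main
begin

definition is_semigroup :: "('a \<Rightarrow> 'a \<Rightarrow> 'a) \<Rightarrow> bool" where
  "is_semigroup add \<longleftrightarrow> (\<forall>a b c. add (add a b) c = add a (add b c))"

definition is_group :: "('a \<Rightarrow> 'a \<Rightarrow> 'a) \<Rightarrow> ('a \<Rightarrow> 'a) \<Rightarrow> 'a \<Rightarrow> bool" where
  "is_group mul ginv one \<longleftrightarrow>
     (\<forall>a b c. mul (mul a b) c = mul a (mul b c)) \<and>
     (\<forall>a. mul one a = a \<and> mul a one = a) \<and>
     (\<forall>a. mul (ginv a) a = one \<and> mul a (ginv a) = one)"

definition left_semi_brace ::
  "('a \<Rightarrow> 'a \<Rightarrow> 'a) \<Rightarrow> ('a \<Rightarrow> 'a \<Rightarrow> 'a) \<Rightarrow> ('a \<Rightarrow> 'a) \<Rightarrow> 'a \<Rightarrow> bool" where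
  "left_semi_brace add mul ginv one \<longleftrightarrow>
     is_semigroup add \<and> is_group mul ginv one \<and>
     (\<forall>a b c. mul a (add b c) = add (mul a b) (mul a (add (ginv a) c)))"

definition stationary_on_right :: "('a \<Rightarrow> 'a \<Rightarrow> 'a) \<Rightarrow> bool" where
  "stationary_on_right add \<longleftrightarrow>
     (\<forall>a b c x. add a b = add a c \<longrightarrow> add x b = add x c)"

definition rectangular_on :: "'a set \<Rightarrow> ('a \<Rightarrow> 'a \<Rightarrow> 'a) \<Rightarrow> bool" where
  "rectangular_on T add \<longleftrightarrow>
     (\<forall>a\<in>T. \<forall>b\<in>T. \<forall>x\<in>T. \<forall>y\<in>T.
        add a x = add b x \<and> add b x = add a y \<longrightarrow> add a x = add b y)"

definition rectangular_semigroup :: "('a \<Rightarrow> 'a \<Rightarrow> 'a) \<Rightarrow> bool" where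
  "rectangular_semigroup add \<longleftrightarrow> is_semigroup add \<and> rectangular_on UNIV add"

definition idempotents :: "('a \<Rightarrow> 'a \<Rightarrow> 'a) \<Rightarrow> 'a set" where
  "idempotents add = {e. add e e = e}"

definition rectangular_band_on :: "'a set \<Rightarrow> ('a \<Rightarrow> 'a \<Rightarrow> 'a) \<Rightarrow> bool" where
  "rectangular_band_on T add \<longleftrightarrow>
     (\<forall>a\<in>T. \<forall>b\<in>T. add a b \<in> T) \<and>
     (\<forall>a\<in>T. \<forall>b\<in>T. \<forall>c\<in>T. add (add a b) c = add a (add b c)) \<and>
     rectangular_on T add \<and> (\<forall>a\<in>T. add a a = a)"

definition middle_unit :: "('a \<Rightarrow> 'a \<Rightarrow> 'a) \<Rightarrow> 'a \<Rightarrow> bool" where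
  "middle_unit add e \<longleftrightarrow> (\<forall>a b. add (add a e) b = add a b)"

end

theory Submission
  imports Defs
begin

lemma key:
  assumes A: "\<And>a b c. add (add a b) c = add a (add b c)"
  and M: "\<And>a b c. mul (mul a b) c = mul a (mul b c)"
  and U1: "\<And>a. mul one a = a" and U2: "\<And>a. mul a one = a"
  and I1: "\<And>a. mul (ginv a) a = one" and I2: "\<And>a. mul a (ginv a) = one"
  and B: "\<And>a b c. mul a (add b c) = add (mul a b) (mul a (add (ginv a) c))"
  shows "stationary_on_right add
       \<and> rectangular_semigroup add
       \<and> rectangular_band_on (idempotents add) add
       \<and> (\<forall>e. e \<in> idempotents add \<longleftrightarrow> middle_unit add e)"
proof -
  have gg: "ginv (ginv a) = a" for a
    by (metis M U1 U2 I1)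
  have canc: "mul g u = mul g v \<Longrightarrow> u = v" for g u v
    by (metis M U1 I1)
  have mid1: "add (add x one) y = add x y" for x y
  proof -
    have "ginv one = one" by (metis U2 I1)
    then show ?thesis using B[of one x y] by (simp add: U1 A)
  qed
  have st: "add a b = add a c \<Longrightarrow> add x b = add x c" for a b c x
  proof -
    assume h: "add a b = add a c"
    have "mul (ginv a) (add x b) = add (mul (ginv a) x) (mul (ginv a) (add a b))"
      using B[of "ginv a" x b] gg by simp
    also have "\<dots> = mul (ginv a) (add x c)"
      using B[of "ginv a" x c] gg h by simp
    finally show ?thesis by (rule canc)
  qed
  have S: "stationary_on_right add" unfolding stationary_on_right_def using st by blast
  have R: "rectangular_on T add" for T
    unfolding rectangular_on_def using st by metis
  have idmid: "add e e = e \<Longrightarrow> add (add x e) y = add x y" for e x y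
  proof -
    assume h: "add e e = e"
    have "add e (add e y) = add e (add one y)"
      using h mid1[of e y] by (simp add: A[symmetric])
    then have "add x (add e y) = add x (add one y)" by (rule st)
    then show ?thesis using mid1 by (simp add: A)
  qed
  have midid: "add e e = e" if E: "\<And>a b. add (add a e) b = add a b" for e
    by (metis A B E I2 M U2)
  have C: "\<forall>e. e \<in> idempotents add \<longleftrightarrow> middle_unit add e"
  proof (intro allI iffI)
    fix e assume "e \<in> idempotents add"
    then have "add e e = e" unfolding idempotents_def by simp
    then show "middle_unit add e" unfolding middle_unit_def using idmid by blast
  next
    fix e assume "middle_unit add e"
    then have "add e e = e" unfolding middle_unit_def using midid by blast
    then show "e \<in> idempotents add" unfolding idempotents_def by simp
  qed
  have "add (add e f) (add e f) = add e f" if "add e e = e" "add f f = f" for e f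
  proof -
    have "add (add e f) (add e f) = add (add (add e f) e) f" by (simp add: A)
    also have "\<dots> = add (add e f) f" by (rule idmid[OF that(1)])
    also have "\<dots> = add e f" using that(2) by (simp add: A)
    finally show ?thesis .
  qed
  then have RB: "rectangular_band_on (idempotents add) add"
    unfolding rectangular_band_on_def idempotents_def using A R by auto
  show ?thesis using S R RB C A unfolding rectangular_semigroup_def is_semigroup_def by blast
qed

theorem proposition9:
  fixes add mul :: "'a \<Rightarrow> 'a \<Rightarrow> 'a" and ginv :: "'a \<Rightarrow> 'a" and one :: 'a
  assumes "left_semi_brace add mul ginv one"
  shows "stationary_on_right add
       \<and> rectangular_semigroup add
       \<and> rectangular_band_on (idempotents add) add
       \<and> (\<forall>e. e \<in> idempotents add \<longleftrightarrow> middle_unit add e)"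
proof -
  have h: "(\<forall>a b c. add (add a b) c = add a (add b c)) \<and>
    (\<forall>a b c. mul (mul a b) c = mul a (mul b c)) \<and>
    (\<forall>a. mul one a = a \<and> mul a one = a) \<and>
    (\<forall>a. mul (ginv a) a = one \<and> mul a (ginv a) = one) \<and>
    (\<forall>a b c. mul a (add b c) = add (mul a b) (mul a (add (ginv a) c)))"
    using assms unfolding left_semi_brace_def is_semigroup_def is_group_def by blast
  show ?thesis
    apply (rule key[where mul=mul and ginv=ginv and one=one])
    using h by blast+
qed

end
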